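(* Let $d\ge0$ and let $L:\mathbb{C}_{2d+2}[z,\overline z]\to\mathbb{C}$ be a real linear functional, non-negative on hermitian squares ($L(|f(z)|^2)\ge0$ for all $f\in\mathbb{C}_{d+1}[z]$), such that multiplication by $z$ induces a well-defined map $M_z:A_d\to A_{d+1}$ (i.e. $p\in\mathbb{C}_d[z]$, $L(|p|^2)=0$ imply $L(|zp|^2)=0$). Let $M=\pi_d M_z|_{A_d}$ and let $\mathbf 1\in A_d$ be the class of the constant polynomial $1$. Then $$L(p\,\overline q)=\langle p(M)\mathbf 1,\, q(M)\mathbf 1\rangle_L$$ for all $p,q\in\mathbb{C}_{d+1}[z]$ with $\deg p+\deg q\le 2d+1$ (i.e. $p$ and $q$ are not both of degree $d+1$).
   Context: Notation: $\mathbb{C}_n[z]$ is the space of complex polynomials in the complex variable $z$ of degree $\le n$; $\mathbb{C}_n[z,\overline z]$ is the space of polynomials in $z,\overline z$ of total degree $\le n$. $L$ real means $L(\overline p)=\overline{L(p)}$. The form $\langle p,q\rangle_L=L(p\overline q)$ is positive semidefinite on $\mathbb{C}_{d+1}[z]$ with null space $N=\{p: L(|p|^2)=0\}$; $A_k=\mathbb{C}_k[z]/(\mathbb{C}_k[z]\cap N)$ ($k\le d+1$) are finite-dimensional Hilbert spaces with $A_d\subseteq A_{d+1}$, and $\pi_d$ is the orthogonal projection of $A_{d+1}$ onto $A_d$. $M_z:A_d\to A_{d+1}$ is induced by $p\mapsto zp$. For a polynomial $p(z)=\sum_j p_j z^j$, $p(M)=\sum_j p_jM^j$. *)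

theory Defs
  imports Complex_Main "HOL-Computational_Algebra.Polynomial"
begin

text \<open>Polynomials in z and conj z are represented by their coefficient functions:
  f j k is the coefficient of the monomial z^j (conj z)^k.\<close>
type_synonym bipoly = "nat \<Rightarrow> nat \<Rightarrow> complex"

definition in_bipoly :: "nat \<Rightarrow> bipoly \<Rightarrow> bool" where
  "in_bipoly n f \<longleftrightarrow> (\<forall>j k. n < j + k \<longrightarrow> f j k = 0)"

text \<open>Complex conjugate of a bivariate polynomial: conj(z^j conj(z)^k) = z^k conj(z)^j.\<close>
definition biconj :: "bipoly \<Rightarrow> bipoly" where
  "biconj f = (\<lambda>j k. cnj (f k j))"

text \<open>The element p(z) * conj(q(z)) of C[z, conj z].\<close>
definition herm :: "complex poly \<Rightarrow> complex poly \<Rightarrow> bipoly" where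
  "herm p q = (\<lambda>j k. coeff p j * cnj (coeff q k))"

definition lin_on :: "nat \<Rightarrow> (bipoly \<Rightarrow> complex) \<Rightarrow> bool" where
  "lin_on n L \<longleftrightarrow>
     (\<forall>f g. in_bipoly n f \<longrightarrow> in_bipoly n g \<longrightarrow> L (\<lambda>j k. f j k + g j k) = L f + L g) \<and>
     (\<forall>c f. in_bipoly n f \<longrightarrow> L (\<lambda>j k. c * f j k) = c * L f)"

definition real_on :: "nat \<Rightarrow> (bipoly \<Rightarrow> complex) \<Rightarrow> bool" where
  "real_on n L \<longleftrightarrow> (\<forall>f. in_bipoly n f \<longrightarrow> L (biconj f) = cnj (L f))"

definition ipL :: "(bipoly \<Rightarrow> complex) \<Rightarrow> complex poly \<Rightarrow> complex poly \<Rightarrow> complex" where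
  "ipL L p q = L (herm p q)"

text \<open>Orthogonal projection pi_d of A_{d+1} onto A_d, on representatives:
  a polynomial g of degree \<le> d with f - g orthogonal to C_d[z]
  (determined up to the null space N).\<close>
definition proj_d :: "(bipoly \<Rightarrow> complex) \<Rightarrow> nat \<Rightarrow> complex poly \<Rightarrow> complex poly" where
  "proj_d L d f = (SOME g. degree g \<le> d \<and> (\<forall>h. degree h \<le> d \<longrightarrow> ipL L (f - g) h = 0))"

definition Mop :: "(bipoly \<Rightarrow> complex) \<Rightarrow> nat \<Rightarrow> complex poly \<Rightarrow> complex poly" where
  "Mop L d g = proj_d L d ([:0, 1:] * g)"

definition polyM1 :: "(bipoly \<Rightarrow> complex) \<Rightarrow> nat \<Rightarrow> complex poly \<Rightarrow> complex poly" where
  "polyM1 L d p = (\<Sum>j\<le>degree p. smult (coeff p j) ((Mop L d ^^ j) 1))"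

end

theory Submission
  imports Defs
begin

lemma herm_in:
  assumes "degree p \<le> d+1" "degree q \<le> d+1"
  shows "in_bipoly (2*d+2) (herm p q)"
  unfolding in_bipoly_def herm_def
proof (intro allI impI)
  fix j k assume "2*d+2 < j+k"
  then have "j > d+1 \<or> k > d+1" by arith
  then show "coeff p j * cnj (coeff q k) = 0"
    using assms by (auto simp: coeff_eq_0)
qed

context
  fixes d :: nat and L :: "bipoly \<Rightarrow> complex"
  assumes lin: "lin_on (2*d+2) L"
begin

lemma ip_add_left:
  assumes "degree p \<le> d+1" "degree p' \<le> d+1" "degree q \<le> d+1"
  shows "ipL L (p + p') q = ipL L p q + ipL L p' q"
proof -
  have "herm (p + p') q = (\<lambda>j k. herm p q j k + herm p' q j k)"
    by (auto simp: herm_def fun_eq_iff algebra_simps)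
  then show ?thesis using lin herm_in[OF assms(1,3)] herm_in[OF assms(2,3)]
    unfolding ipL_def lin_on_def by simp
qed

lemma ip_add_right:
  assumes "degree p \<le> d+1" "degree q \<le> d+1" "degree q' \<le> d+1"
  shows "ipL L p (q + q') = ipL L p q + ipL L p q'"
proof -
  have "herm p (q + q') = (\<lambda>j k. herm p q j k + herm p q' j k)"
    by (auto simp: herm_def fun_eq_iff algebra_simps)
  then show ?thesis using lin herm_in[OF assms(1,2)] herm_in[OF assms(1,3)]
    unfolding ipL_def lin_on_def by simp
qed

lemma ip_smult_left:
  assumes "degree p \<le> d+1" "degree q \<le> d+1"
  shows "ipL L (smult c p) q = c * ipL L p q"
proof -
  have "herm (smult c p) q = (\<lambda>j k. c * herm p q j k)"
    by (auto simp: herm_def fun_eq_iff algebra_simps)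
  then show ?thesis using lin herm_in[OF assms(1,2)]
    unfolding ipL_def lin_on_def by simp
qed

lemma ip_smult_right:
  assumes "degree p \<le> d+1" "degree q \<le> d+1"
  shows "ipL L p (smult c q) = cnj c * ipL L p q"
proof -
  have "herm p (smult c q) = (\<lambda>j k. cnj c * herm p q j k)"
    by (auto simp: herm_def fun_eq_iff algebra_simps)
  then show ?thesis using lin herm_in[OF assms(1,2)]
    unfolding ipL_def lin_on_def by simp
qed

lemma ip_zero_left:
  assumes "degree q \<le> d+1"
  shows "ipL L 0 q = 0"
  using ip_smult_left[of 0 q 0] assms by simp

lemma ip_zero_right:
  assumes "degree q \<le> d+1"
  shows "ipL L q 0 = 0"
  using ip_smult_right[of q 0 0] assms by simp

lemma ip_diff_left:
  assumes "degree p \<le> d+1" "degree p' \<le> d+1" "degree q \<le> d+1"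
  shows "ipL L (p - p') q = ipL L p q - ipL L p' q"
proof -
  have dd: "degree (p - p') \<le> d+1" using assms degree_diff_le by blast
  have "ipL L p q = ipL L ((p - p') + p') q" by simp
  also have "\<dots> = ipL L (p - p') q + ipL L p' q"
    using ip_add_left[OF dd assms(2,3)] .
  finally show ?thesis by simp
qed

lemma ip_diff_right:
  assumes "degree p \<le> d+1" "degree q \<le> d+1" "degree q' \<le> d+1"
  shows "ipL L p (q - q') = ipL L p q - ipL L p q'"
proof -
  have dd: "degree (q - q') \<le> d+1" using assms degree_diff_le by blast
  have "ipL L p q = ipL L p ((q - q') + q')" by simp
  also have "\<dots> = ipL L p (q - q') + ipL L p q'"
    using ip_add_right[OF assms(1) dd assms(3)] .
  finally show ?thesis by simp
qed

end


context
  fixes d :: nat and L :: "bipoly \<Rightarrow> complex"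
  assumes lin: "lin_on (2*d+2) L"
    and real: "real_on (2*d+2) L"
    and pos: "\<forall>f :: complex poly. degree f \<le> d + 1 \<longrightarrow>
                 Im (L (herm f f)) = 0 \<and> 0 \<le> Re (L (herm f f))"
begin

lemma ip_conj:
  assumes "degree p \<le> d+1" "degree q \<le> d+1"
  shows "ipL L q p = cnj (ipL L p q)"
proof -
  have "biconj (herm p q) = herm q p"
    by (auto simp: biconj_def herm_def fun_eq_iff)
  then show ?thesis using real herm_in[OF assms] unfolding real_on_def ipL_def by metis
qed

lemma ip_null:
  assumes n: "degree n \<le> d+1" and h: "degree h \<le> d+1" and nn: "ipL L n n = 0"
  shows "ipL L n h = 0"
proof -
  define a where "a = ipL L n h"
  define c where "c = Re (ipL L h h)"
  have hh: "ipL L h h = complex_of_real c"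
    using pos h unfolding c_def ipL_def by (simp add: complex_eq_iff)
  have c0: "c \<ge> 0" using pos h unfolding c_def ipL_def by simp
  define s where "s = c + 1"
  have s0: "s > 0" using c0 s_def by simp
  define t where "t = - a / complex_of_real s"
  have ht: "degree (smult t h) \<le> d+1" using h by simp
  have nt: "degree (n + smult t h) \<le> d+1" using n ht degree_add_le by blast
  have hn: "ipL L h n = cnj a" using ip_conj[OF n h] a_def by simp
  have "ipL L (n + smult t h) (n + smult t h)
      = ipL L n n + ipL L n (smult t h) + (ipL L (smult t h) n + ipL L (smult t h) (smult t h))"
    using ip_add_left[OF lin n ht nt] ip_add_right[OF lin n n ht] ip_add_right[OF lin ht n ht]
    by simp
  also have "\<dots> = cnj t * a + t * cnj a + t * cnj t * complex_of_real c"
    using nn ip_smult_left[OF lin h n] ip_smult_right[OF lin n h]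
      ip_smult_left[OF lin h ht] ip_smult_right[OF lin h h] hh hn a_def
    by (simp add: algebra_simps)
  also have "\<dots> = complex_of_real ((cmod a)^2 * (c - 2*s) / s^2)"
  proof -
    have aa: "a * cnj a = complex_of_real ((cmod a)^2)" using complex_norm_square[of a] by simp
    have sne: "complex_of_real s \<noteq> 0" using s0 by simp
    have ct: "cnj t = - cnj a / complex_of_real s" unfolding t_def by simp
    have e1: "cnj t * a = - complex_of_real ((cmod a)^2 / s)"
      unfolding ct using aa by (simp add: mult.commute)
    have e2: "t * cnj a = - complex_of_real ((cmod a)^2 / s)"
      unfolding t_def using aa by simp
    have e3: "t * cnj t = complex_of_real ((cmod a)^2 / s^2)"
      unfolding ct t_def using aa sne by (simp add: power2_eq_square)
    have "cnj t * a + t * cnj a + t * cnj t * complex_of_real c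
       = complex_of_real (- ((cmod a)^2 / s) - ((cmod a)^2 / s) + (cmod a)^2 / s^2 * c)"
      unfolding e1 e2 e3 by simp
    also have "- ((cmod a)^2 / s) - ((cmod a)^2 / s) + (cmod a)^2 / s^2 * c
       = (cmod a)^2 * (c - 2*s) / s^2" using s0 by (simp add: field_simps power2_eq_square)
    finally show ?thesis .
  qed
  finally have eq: "ipL L (n + smult t h) (n + smult t h) = complex_of_real ((cmod a)^2 * (c - 2*s) / s^2)" .
  have "0 \<le> Re (ipL L (n + smult t h) (n + smult t h))" using pos nt unfolding ipL_def by blast
  then have "0 \<le> (cmod a)^2 * (c - 2*s) / s^2" using eq by simp
  moreover have "c - 2*s < 0" using s_def c0 by simp
  ultimately have "(cmod a)^2 \<le> 0" using s0
    by (smt (verit) divide_nonneg_pos mult_pos_neg zero_less_power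
        divide_neg_pos zero_le_power2 mult_le_0_iff)
  then show ?thesis using a_def by simp
qed

lemma ip_null_right:
  assumes n: "degree n \<le> d+1" and h: "degree h \<le> d+1" and nn: "ipL L n n = 0"
  shows "ipL L h n = 0"
  using ip_conj[OF n h] ip_null[OF n h nn] by simp


lemma P_deg:
  assumes "\<forall>i\<ge>m. coeff x i = (0::complex)" "m \<le> d+1"
  shows "degree x \<le> d+1"
  using assms by (intro degree_le) auto

lemma proj_ex:
  assumes "m \<le> d+1" "degree f \<le> d+1"
  shows "\<exists>g. (\<forall>i\<ge>m. coeff g i = 0) \<and>
             (\<forall>h. (\<forall>i\<ge>m. coeff h i = 0) \<longrightarrow> ipL L (f - g) h = 0)"
  using assms
proof (induction m arbitrary: f)
  case 0
  then show ?case
  proof (intro exI[of _ 0] conjI allI impI)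
    fix h :: "complex poly" assume "\<forall>i\<ge>0. coeff h i = 0"
    then have "h = 0" by (simp add: poly_eq_iff)
    then show "ipL L (f - 0) h = 0" using ip_zero_right[OF lin] 0 by simp
  qed simp
next
  case (Suc m f)
  have m: "m \<le> d+1" using Suc by simp
  have dm: "degree (monom (1::complex) m) \<le> d+1" using Suc by (simp add: degree_monom_eq)
  obtain g0 where g0: "\<forall>i\<ge>m. coeff g0 i = 0"
    "\<forall>h. (\<forall>i\<ge>m. coeff h i = 0) \<longrightarrow> ipL L (f - g0) h = 0"
    using Suc.IH[OF m Suc.prems(2)] by blast
  obtain g1 where g1: "\<forall>i\<ge>m. coeff g1 i = 0"
    "\<forall>h. (\<forall>i\<ge>m. coeff h i = 0) \<longrightarrow> ipL L (monom 1 m - g1) h = 0"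
    using Suc.IH[OF m dm] by blast
  define e where "e = monom 1 m - g1"
  define \<alpha> where "\<alpha> = ipL L (f - g0) e / ipL L e e"
  define g where "g = g0 + smult \<alpha> e"
  have dg0: "degree g0 \<le> d+1" using P_deg[OF g0(1) m] .
  have dg1: "degree g1 \<le> d+1" using P_deg[OF g1(1) m] .
  have de: "degree e \<le> d+1" unfolding e_def using dm dg1 degree_diff_le by blast
  have dfg0: "degree (f - g0) \<le> d+1" using Suc.prems(2) dg0 degree_diff_le by blast
  have dae: "degree (smult \<alpha> e) \<le> d+1" using de by simp
  have fg: "f - g = (f - g0) - smult \<alpha> e" unfolding g_def by simp
  have dfg: "degree (f - g) \<le> d+1" unfolding fg using dfg0 dae degree_diff_le by blast
  have orth_e: "ipL L (f - g) e = 0"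
  proof -
    have "ipL L (f - g) e = ipL L (f - g0) e - \<alpha> * ipL L e e"
      unfolding fg using ip_diff_left[OF lin dfg0 dae de] ip_smult_left[OF lin de de] by simp
    also have "\<dots> = 0"
    proof (cases "ipL L e e = 0")
      case True
      then have "ipL L (f - g0) e = 0" using ip_null_right[OF de dfg0] by simp
      then show ?thesis using True by simp
    next
      case False
      then show ?thesis unfolding \<alpha>_def by simp
    qed
    finally show ?thesis .
  qed
  show ?case
  proof (intro exI[of _ g] conjI allI impI)
    fix i assume "Suc m \<le> i"
    then show "coeff g i = 0" using g0(1) g1(1) unfolding g_def e_def
      by (simp add: coeff_monom)
  next
    fix h :: "complex poly" assume h: "\<forall>i\<ge>Suc m. coeff h i = 0"
    have dh: "degree h \<le> d+1" using P_deg[OF h Suc.prems(1)] .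
    define c where "c = coeff h m"
    define h1 where "h1 = h - smult c e"
    have ph1: "\<forall>i\<ge>m. coeff h1 i = 0"
    proof (intro allI impI)
      fix i assume "m \<le> i"
      then show "coeff h1 i = 0" using h g1(1) unfolding h1_def e_def c_def
        by (cases "i = m") (auto simp: coeff_monom)
    qed
    have dh1: "degree h1 \<le> d+1" using P_deg[OF ph1 m] .
    have dce: "degree (smult c e) \<le> d+1" using de by simp
    have hh: "h = h1 + smult c e" unfolding h1_def by simp
    have o1: "ipL L (f - g) h1 = 0"
    proof -
      have "ipL L (f - g) h1 = ipL L (f - g0) h1 - \<alpha> * ipL L e h1"
        unfolding fg using ip_diff_left[OF lin dfg0 dae dh1] ip_smult_left[OF lin de dh1] by simp
      also have "\<dots> = 0" using g0(2) g1(2) ph1 unfolding e_def by simp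
      finally show ?thesis .
    qed
    have "ipL L (f - g) h = ipL L (f - g) h1 + ipL L (f - g) (smult c e)"
      using hh ip_add_right[OF lin dfg dh1 dce] by simp
    also have "\<dots> = 0" using o1 orth_e ip_smult_right[OF lin dfg de] by simp
    finally show "ipL L (f - g) h = 0" .
  qed
qed

lemma proj_d_prop:
  assumes "degree f \<le> d+1"
  shows "degree (proj_d L d f) \<le> d \<and>
         (\<forall>h. degree h \<le> d \<longrightarrow> ipL L (f - proj_d L d f) h = 0)"
proof -
  obtain g where g: "\<forall>i\<ge>d+1. coeff g i = 0"
    "\<forall>h. (\<forall>i\<ge>d+1. coeff h i = 0) \<longrightarrow> ipL L (f - g) h = 0"
    using proj_ex[of "d+1" f] assms by blast
  have "degree g \<le> d \<and> (\<forall>h. degree h \<le> d \<longrightarrow> ipL L (f - g) h = 0)"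
    using g by (auto intro!: degree_le simp: coeff_eq_0)
  then show ?thesis unfolding proj_d_def by (rule someI)
qed

end


context
  fixes d :: nat and L :: "bipoly \<Rightarrow> complex"
  assumes lin: "lin_on (2*d+2) L"
    and real: "real_on (2*d+2) L"
    and pos: "\<forall>f :: complex poly. degree f \<le> d + 1 \<longrightarrow>
                 Im (L (herm f f)) = 0 \<and> 0 \<le> Re (L (herm f f))"
    and wd: "\<forall>p :: complex poly. degree p \<le> d \<longrightarrow> L (herm p p) = 0 \<longrightarrow>
                 L (herm ([:0, 1:] * p) ([:0, 1:] * p)) = 0"
begin

lemma X_monom: "[:0, 1:] * monom (1::complex) j = monom 1 (Suc j)"
  by (simp add: poly_eq_iff coeff_pCons coeff_monom split: nat.split)

lemma R_prop:
  "j \<le> d+1 \<Longrightarrow> degree ((Mop L d ^^ j) 1) \<le> d \<and>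
     (\<forall>h. degree h \<le> d \<longrightarrow> ipL L (monom 1 j - (Mop L d ^^ j) 1) h = 0)"
proof (induction j)
  case 0
  then show ?case using ip_zero_left[OF lin] by simp
next
  case (Suc j)
  define r where "r = (Mop L d ^^ j) 1"
  have IH: "degree r \<le> d" "\<forall>h. degree h \<le> d \<longrightarrow> ipL L (monom 1 j - r) h = 0"
    using Suc by (auto simp: r_def)
  have jd: "j \<le> d" using Suc by simp
  have dm: "degree (monom (1::complex) j) \<le> d" using jd by (simp add: degree_monom_eq)
  have dn: "degree (monom 1 j - r) \<le> d" using dm IH(1) degree_diff_le by blast
  have dn1: "degree (monom 1 j - r) \<le> d+1" using dn by simp
  have null: "ipL L (monom 1 j - r) (monom 1 j - r) = 0"
    using ip_diff_right[OF lin dn1, of "monom 1 j" r] IH dm by simp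
  have Xn: "ipL L ([:0,1:] * (monom 1 j - r)) ([:0,1:] * (monom 1 j - r)) = 0"
    using wd dn null unfolding ipL_def by blast
  have dXr: "degree ([:0,1:] * r) \<le> d+1"
    using IH(1) degree_mult_le[of "[:0,1:]" r] by simp
  have dXn: "degree ([:0,1:] * (monom 1 j - r)) \<le> d+1"
    using dn degree_mult_le[of "[:0,1:]" "monom 1 j - r"] by simp
  have pr: "degree (proj_d L d ([:0,1:] * r)) \<le> d"
     "\<forall>h. degree h \<le> d \<longrightarrow> ipL L ([:0,1:] * r - proj_d L d ([:0,1:] * r)) h = 0"
    using proj_d_prop[OF lin real pos dXr] by auto
  have R: "(Mop L d ^^ Suc j) 1 = proj_d L d ([:0,1:] * r)"
    by (simp add: r_def Mop_def)
  define r' where "r' = proj_d L d ([:0,1:] * r)"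
  have dr': "degree ([:0,1:] * r - r') \<le> d+1"
    using pr(1) unfolding r'_def by (intro degree_diff_le[OF dXr]) simp
  have split: "monom 1 (Suc j) - r' = [:0,1:] * (monom 1 j - r) + ([:0,1:] * r - r')"
    using X_monom[of j] by (simp add: algebra_simps)
  show ?case
  proof (unfold R, intro conjI allI impI)
    show "degree (proj_d L d ([:0,1:] * r)) \<le> d" using pr(1) .
  next
    fix h :: "complex poly" assume h: "degree h \<le> d"
    then have h1: "degree h \<le> d+1" by simp
    have "ipL L (monom 1 (Suc j) - r') h
       = ipL L ([:0,1:] * (monom 1 j - r)) h + ipL L ([:0,1:] * r - r') h"
      unfolding split using ip_add_left[OF lin dXn dr' h1] .
    also have "\<dots> = 0" using ip_null[OF lin real pos dXn h1 Xn] pr(2) h unfolding r'_def by simp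
    finally show "ipL L (monom 1 (Suc j) - proj_d L d ([:0,1:] * r)) h = 0"
      unfolding r'_def .
  qed
qed


lemma R_null_all:
  assumes j: "j \<le> d" and h: "degree h \<le> d+1"
  shows "ipL L (monom 1 j - (Mop L d ^^ j) 1) h = 0"
proof -
  define r where "r = (Mop L d ^^ j) 1"
  have rp: "degree r \<le> d" "\<forall>h. degree h \<le> d \<longrightarrow> ipL L (monom 1 j - r) h = 0"
    using R_prop[of j] j by (auto simp: r_def)
  have dm: "degree (monom (1::complex) j) \<le> d" using j by (simp add: degree_monom_eq)
  have dn1: "degree (monom 1 j - r) \<le> d+1" using dm rp(1) degree_diff_le by fastforce
  have null: "ipL L (monom 1 j - r) (monom 1 j - r) = 0"
    using ip_diff_right[OF lin dn1, of "monom 1 j" r] rp dm by simp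
  show ?thesis using ip_null[OF lin real pos dn1 h null] unfolding r_def .
qed

lemma sum_Q:
  assumes "finite A"
    and "\<forall>j\<in>A. degree (f j) \<le> d+1 \<and> (\<forall>h. degree h \<le> k \<longrightarrow> ipL L (f j) h = 0)"
    and k: "k \<le> d+1"
  shows "degree (sum f A) \<le> d+1 \<and> (\<forall>h. degree h \<le> k \<longrightarrow> ipL L (sum f A) h = 0)"
  using assms(1,2)
proof (induction A rule: finite_induct)
  case empty
  then show ?case using ip_zero_left[OF lin] k by auto
next
  case (insert x F)
  have dx: "degree (f x) \<le> d+1" and dF: "degree (sum f F) \<le> d+1"
    using insert by auto
  have ds: "degree (f x + sum f F) \<le> d+1" using dx dF degree_add_le by blast
  show ?case
  proof (intro conjI allI impI)
    show "degree (sum f (insert x F)) \<le> d+1" using ds insert by simp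
  next
    fix h :: "complex poly" assume h: "degree h \<le> k"
    then have h1: "degree h \<le> d+1" using k by simp
    have "ipL L (sum f (insert x F)) h = ipL L (f x) h + ipL L (sum f F) h"
      using insert(1,2) ip_add_left[OF lin dx dF h1] by simp
    then show "ipL L (sum f (insert x F)) h = 0" using insert h by simp
  qed
qed

lemma E_eq:
  "p - polyM1 L d p = (\<Sum>j\<le>degree p. smult (coeff p j) (monom 1 j - (Mop L d ^^ j) 1))"
proof -
  have "p = (\<Sum>j\<le>degree p. smult (coeff p j) (monom 1 j))"
    using poly_as_sum_of_monoms[of p] by (simp add: smult_monom)
  then have "p - polyM1 L d p = (\<Sum>j\<le>degree p. smult (coeff p j) (monom 1 j))
       - (\<Sum>j\<le>degree p. smult (coeff p j) ((Mop L d ^^ j) 1))"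
    unfolding polyM1_def by simp
  also have "\<dots> = (\<Sum>j\<le>degree p. smult (coeff p j) (monom 1 j - (Mop L d ^^ j) 1))"
    by (simp add: sum_subtractf smult_diff_right)
  finally show ?thesis .
qed

lemma E_Q:
  assumes p: "degree p \<le> d+1" and k: "k = (if degree p \<le> d then d+1 else d)"
  shows "degree (p - polyM1 L d p) \<le> d+1 \<and>
    (\<forall>h. degree h \<le> k \<longrightarrow> ipL L (p - polyM1 L d p) h = 0)"
  unfolding E_eq
proof (rule sum_Q)
  show "k \<le> d+1" using k by simp
  show "\<forall>j\<in>{..degree p}. degree (smult (coeff p j) (monom 1 j - (Mop L d ^^ j) 1)) \<le> d + 1 \<and>
          (\<forall>h. degree h \<le> k \<longrightarrow> ipL L (smult (coeff p j) (monom 1 j - (Mop L d ^^ j) 1)) h = 0)"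
  proof (intro ballI conjI allI impI)
    fix j assume "j \<in> {..degree p}"
    then have jp: "j \<le> degree p" by simp
    then have jd: "j \<le> d+1" using p by simp
    have dm: "degree (monom (1::complex) j) \<le> d+1" using jd by (simp add: degree_monom_eq)
    have dr: "degree ((Mop L d ^^ j) 1) \<le> d" using R_prop[OF jd] by simp
    have dn: "degree (monom 1 j - (Mop L d ^^ j) 1) \<le> d+1"
      using dm dr by (intro degree_diff_le) auto
    show "degree (smult (coeff p j) (monom 1 j - (Mop L d ^^ j) 1)) \<le> d + 1" using dn by simp
    fix h :: "complex poly" assume h: "degree h \<le> k"
    then have h1: "degree h \<le> d+1" using k by (simp split: if_splits)
    have "ipL L (monom 1 j - (Mop L d ^^ j) 1) h = 0"
    proof (cases "j \<le> d")
      case True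
      then show ?thesis using R_null_all h1 by blast
    next
      case False
      then have "j = d+1" "\<not> degree p \<le> d" using jd jp by auto
      then show ?thesis using R_prop[OF jd] h k by simp
    qed
    then show "ipL L (smult (coeff p j) (monom 1 j - (Mop L d ^^ j) 1)) h = 0"
      using ip_smult_left[OF lin dn h1] by simp
  qed
qed simp

lemma main:
  assumes p: "degree p \<le> d+1" and q: "degree q \<le> d+1" and pq: "degree p + degree q \<le> 2*d+1"
  shows "L (herm p q) = ipL L (polyM1 L d p) (polyM1 L d q)"
proof -
  define Ep where "Ep = p - polyM1 L d p"
  define Eq where "Eq = q - polyM1 L d q"
  obtain Qp: "degree Ep \<le> d+1"
    "\<forall>h. degree h \<le> (if degree p \<le> d then d+1 else d) \<longrightarrow> ipL L Ep h = 0"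
    using E_Q[OF p refl] unfolding Ep_def by blast
  obtain Qq: "degree Eq \<le> d+1"
    "\<forall>h. degree h \<le> (if degree q \<le> d then d+1 else d) \<longrightarrow> ipL L Eq h = 0"
    using E_Q[OF q refl] unfolding Eq_def by blast
  have P: "polyM1 L d p = p - Ep" and Q: "polyM1 L d q = q - Eq" unfolding Ep_def Eq_def by simp_all
  have dqE: "degree (q - Eq) \<le> d+1" using q Qq(1) by (intro degree_diff_le)
  have "ipL L (p - Ep) (q - Eq) = ipL L p (q - Eq) - ipL L Ep (q - Eq)"
    using ip_diff_left[OF lin p Qp(1) dqE] .
  also have "\<dots> = ipL L p q - ipL L p Eq - (ipL L Ep q - ipL L Ep Eq)"
    using ip_diff_right[OF lin p q Qq(1)] ip_diff_right[OF lin Qp(1) q Qq(1)] by simp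
  also have "\<dots> = ipL L p q"
  proof (cases "degree q \<le> d")
    case True
    have "ipL L p Eq = 0" using ip_conj[OF lin real pos Qq(1) p] Qq(2) True p by simp
    moreover have "ipL L Ep Eq = 0" using ip_conj[OF lin real pos Qq(1) Qp(1)] Qq(2) True Qp(1) by simp
    moreover have "ipL L Ep q = 0" using Qp(2) True by (simp split: if_splits)
    ultimately show ?thesis by simp
  next
    case False
    then have pd: "degree p \<le> d" using pq q by simp
    have "ipL L Ep q = 0" "ipL L Ep Eq = 0" using Qp(2) pd q Qq(1) by simp_all
    moreover have "ipL L p Eq = 0" using ip_conj[OF lin real pos Qq(1) p] Qq(2) pd by simp
    ultimately show ?thesis by simp
  qed
  finally show ?thesis unfolding P Q ipL_def by simp
qed

end

theorem lemma2:
  fixes d :: nat and L :: "bipoly \<Rightarrow> complex"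
  assumes lin: "lin_on (2*d+2) L"
    and real: "real_on (2*d+2) L"
    and pos: "\<forall>f :: complex poly. degree f \<le> d + 1 \<longrightarrow>
                 Im (L (herm f f)) = 0 \<and> 0 \<le> Re (L (herm f f))"
    and wd: "\<forall>p :: complex poly. degree p \<le> d \<longrightarrow> L (herm p p) = 0 \<longrightarrow>
                 L (herm ([:0, 1:] * p) ([:0, 1:] * p)) = 0"
  shows "\<forall>p q :: complex poly. degree p \<le> d + 1 \<longrightarrow> degree q \<le> d + 1 \<longrightarrow>
           degree p + degree q \<le> 2*d + 1 \<longrightarrow>
           L (herm p q) = ipL L (polyM1 L d p) (polyM1 L d q)"
  using main[OF lin real pos wd] by blast

end
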